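(* Let $X$ be a Euclidean polyhedral space, $U\subset X$ an open subset, $\Pi$ a polyhedral complex on $X$, $f,g$ piecewise affine functions on $U$ defined on $\Pi$, and $c$ a $k$-dimensional weight on $\Pi|_U$. Then $f\cdot(g\cdot c)=g\cdot(f\cdot c)$.
   Context: Polyhedral spaces. Let $X$ be a second countable topological space. A polyhedral structure $\Pi$ on $X$ is a locally finite covering of $X$ by distinct closed subsets $\sigma$ (the polyhedra of $\Pi$), each equipped with a finite-dimensional vector space $M_\sigma$ of continuous real functions on $\sigma$ such that, with $N_\sigma=\operatorname{Hom}(M_\sigma,\mathbb{R})$, the evaluation map $\phi_\sigma\colon\sigma\to N_\sigma$ is a homeomorphism onto a full-dimensional convex polyhedron of an affine hyperplane $H_\sigma\subset N_\sigma$ not containing $0$. Faces of $\sigma$ are the preimages under $\phi_\sigma$ of faces of $\phi_\sigma(\sigma)$ (the empty set is a face). One requires that every face of a polyhedron of $\Pi$ is a polyhedron of $\Pi$ whose function space consists of the restrictions of the functions in $M_\sigma$, and that any two polyhedra intersect in a common face. Via $\phi_\sigma$, each polyhedron inherits an affine structure (its affine functions are the elements of $M_\sigma$), a dimension, faces, facets (codimension-one faces), and a relative interior. $\Pi'$ is a subdivision of $\Pi$ if every polyhedron of $\Pi'$ is contained in a polyhedron of $\Pi$ with affine inclusion; two structures are equivalent if they have a common subdivision. A polyhedral space is $X$ with an equivalence class of polyhedral structures; a polyhedral complex on $X$ is a member of this class. We write $\tau\prec\sigma$ (or $\sigma\succ\tau$) if $\tau$ is a face of $\sigma$. Euclidean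 polyhedral spaces. A Euclidean polyhedral space is a polyhedral space $X$ together with a finite-dimensional real vector space $N_X$ with a Euclidean inner product and a map $\iota\colon X\to N_X$ whose image lies in an affine hyperplane $H_X$ not containing $0$, such that there is a polyhedral complex on $X$ on each of whose polyhedra $\iota$ is injective and affine; only polyhedral complexes with this property are called polyhedral complexes on $X$. For $\sigma\in\Pi$ and a nonempty facet $\tau$ of $\sigma$, $v_{\sigma\setminus\tau}\in N_X$ denotes the unit vector orthogonal to the affine span of $\iota(\tau)$, parallel to the affine span of $\iota(\sigma)$, and pointing from $\iota(\tau)$ towards $\iota(\sigma)$. Weights and products. For $U\subset X$ open, $\Pi|_U$ is the set of polyhedra of $\Pi$ meeting $U$ and $\Pi|_U(k)$ the set of those of dimension $k$. A $k$-dimensional weight on $\Pi|_U$ is a map $c\colon\Pi|_U(k)\to\mathbb{R}$ (extended by $0$ on polyhedra of other dimensions). A piecewise affine function on $U$ defined on $\Pi$ is a function $f\colon U\to\mathbb{R}$ such that for every $\sigma\in\Pi|_U$, $f|_{\sigma\cap U}$ is the restriction of an affine function on $\sigma$; one then chooses linear functions $f_\sigma\colon N_X\to\mathbb{R}$ with $f=f_\sigma\circ\iota$ on $\sigma\cap U$. The product $f\cdot c$ is the $(k-1)$-dimensional weight on $\Pi|_U$ given for $\tau\in\Pi|_U(k-1)$ by $(f\cdot c)(\tau)=-\sum_{\sigma\in\Pi|_U(k),\,\sigma\succ\tau}c(\sigma)\,f_\sigma(v_{\sigma\setminus\tau})$ (this does not depend on the choice of the $f_\sigma$). *)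

theory Defs
  imports "HOL-Analysis.Analysis"
begin

text \<open>X is the type 'x (a second countable
topological space), N_X is the Euclidean space 'n, and iota is the map
X to N_X.  Since iota is required to be injective and affine on every
polyhedron of a polyhedral complex on X, the affine structure M_sigma of each
polyhedron sigma is the space of restrictions of linear functionals on N_X
composed with iota, and the evaluation map phi_sigma is identified with
iota restricted to sigma.\<close>

definition image_in_hyperplane :: "('x \<Rightarrow> 'n::euclidean_space) \<Rightarrow> bool" where
  "image_in_hyperplane \<iota> \<longleftrightarrow>
     (\<exists>a b. a \<noteq> 0 \<and> b \<noteq> 0 \<and> (\<forall>x. a \<bullet> \<iota> x = b))"

definition poly_face :: "('x \<Rightarrow> 'n::euclidean_space) \<Rightarrow> 'x set \<Rightarrow> 'x set \<Rightarrow> bool" where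
  "poly_face \<iota> \<tau> \<sigma> \<longleftrightarrow> (\<exists>F. F face_of (\<iota> ` \<sigma>) \<and> \<tau> = {x\<in>\<sigma>. \<iota> x \<in> F})"

text \<open>Dimension of a polyhedron (the empty polyhedron has dimension -1).\<close>
definition pdim :: "('x \<Rightarrow> 'n::euclidean_space) \<Rightarrow> 'x set \<Rightarrow> int" where
  "pdim \<iota> \<sigma> = aff_dim (\<iota> ` \<sigma>)"

definition euclidean_polyhedral_complex ::
    "('x::topological_space \<Rightarrow> 'n::euclidean_space) \<Rightarrow> 'x set set \<Rightarrow> bool" where
  "euclidean_polyhedral_complex \<iota> P \<longleftrightarrow>
     image_in_hyperplane \<iota> \<and>
     \<Union>P = UNIV \<and>
     (\<forall>x. \<exists>V. open V \<and> x \<in> V \<and> finite {\<sigma>\<in>P. \<sigma> \<inter> V \<noteq> {}}) \<and>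
     (\<forall>\<sigma>\<in>P. closed \<sigma> \<and> inj_on \<iota> \<sigma> \<and> (\<exists>g. homeomorphism \<sigma> (\<iota> ` \<sigma>) \<iota> g)
               \<and> polyhedron (\<iota> ` \<sigma>)) \<and>
     (\<forall>\<sigma>\<in>P. \<forall>\<tau>. poly_face \<iota> \<tau> \<sigma> \<longrightarrow> \<tau> \<in> P) \<and>
     (\<forall>\<sigma>\<in>P. \<forall>\<tau>\<in>P. poly_face \<iota> (\<sigma> \<inter> \<tau>) \<sigma> \<and> poly_face \<iota> (\<sigma> \<inter> \<tau>) \<tau>)"

definition restr :: "'x set set \<Rightarrow> 'x set \<Rightarrow> 'x set set" where
  "restr P U = {\<sigma>\<in>P. \<sigma> \<inter> U \<noteq> {}}"

definition pw_affine ::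
    "('x \<Rightarrow> 'n::euclidean_space) \<Rightarrow> 'x set set \<Rightarrow> 'x set \<Rightarrow> ('x \<Rightarrow> real) \<Rightarrow> bool" where
  "pw_affine \<iota> P U f \<longleftrightarrow>
     (\<forall>\<sigma>\<in>restr P U. \<exists>l::'n \<Rightarrow> real. linear l \<and> (\<forall>x\<in>\<sigma> \<inter> U. f x = l (\<iota> x)))"

definition lin_rep ::
    "('x \<Rightarrow> 'n::euclidean_space) \<Rightarrow> 'x set \<Rightarrow> 'x set \<Rightarrow> ('x \<Rightarrow> real) \<Rightarrow> 'n \<Rightarrow> real" where
  "lin_rep \<iota> \<sigma> U f = (SOME l. linear l \<and> (\<forall>x\<in>\<sigma> \<inter> U. f x = l (\<iota> x)))"

definition normal_vec :: "('x \<Rightarrow> 'n::euclidean_space) \<Rightarrow> 'x set \<Rightarrow> 'x set \<Rightarrow> 'n" where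
  "normal_vec \<iota> \<sigma> \<tau> = (THE v. norm v = 1 \<and>
      v \<in> span {y - z | y z. y \<in> \<iota> ` \<sigma> \<and> z \<in> \<iota> ` \<sigma>} \<and>
      (\<forall>y\<in>\<iota> ` \<tau>. \<forall>z\<in>\<iota> ` \<tau>. v \<bullet> (y - z) = 0) \<and>
      (\<forall>y\<in>\<iota> ` \<sigma>. \<forall>z\<in>\<iota> ` \<tau>. 0 \<le> v \<bullet> (y - z)))"

definition is_weight ::
    "('x \<Rightarrow> 'n::euclidean_space) \<Rightarrow> 'x set set \<Rightarrow> 'x set \<Rightarrow> int \<Rightarrow> ('x set \<Rightarrow> real) \<Rightarrow> bool" where
  "is_weight \<iota> P U k c \<longleftrightarrow>
     (\<forall>\<sigma>. \<not> (\<sigma> \<in> restr P U \<and> pdim \<iota> \<sigma> = k) \<longrightarrow> c \<sigma> = 0)"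

definition wmult ::
    "('x \<Rightarrow> 'n::euclidean_space) \<Rightarrow> 'x set set \<Rightarrow> 'x set \<Rightarrow> ('x \<Rightarrow> real) \<Rightarrow> int
     \<Rightarrow> ('x set \<Rightarrow> real) \<Rightarrow> 'x set \<Rightarrow> real" where
  "wmult \<iota> P U f k c \<tau> =
     (if \<tau> \<in> restr P U \<and> pdim \<iota> \<tau> = k - 1
      then - (\<Sum>\<sigma>\<in>{\<sigma>\<in>restr P U. pdim \<iota> \<sigma> = k \<and> poly_face \<iota> \<tau> \<sigma>}.
                 c \<sigma> * lin_rep \<iota> \<sigma> U f (normal_vec \<iota> \<sigma> \<tau>))
      else 0)"

end

theory Submission
  imports Defs
begin


definition dirs :: "'n::euclidean_space set \<Rightarrow> 'n set" where
  "dirs S = span {y - z | y z. y \<in> S \<and> z \<in> S}"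

definition nv :: "'n::euclidean_space set \<Rightarrow> 'n set \<Rightarrow> 'n" where
  "nv S G = (THE v. norm v = 1 \<and>
      v \<in> span {y - z | y z. y \<in> S \<and> z \<in> S} \<and>
      (\<forall>y\<in>G. \<forall>z\<in>G. v \<bullet> (y - z) = 0) \<and>
      (\<forall>y\<in>S. \<forall>z\<in>G. 0 \<le> v \<bullet> (y - z)))"

lemma normal_vec_nv: "normal_vec \<iota> \<sigma> \<tau> = nv (\<iota> ` \<sigma>) (\<iota> ` \<tau>)"
  unfolding normal_vec_def nv_def ..

lemma subspace_dirs[simp]: "subspace (dirs S)"
  unfolding dirs_def by simp

lemma dirs_diff: "y \<in> S \<Longrightarrow> z \<in> S \<Longrightarrow> y - z \<in> dirs S"
  unfolding dirs_def by (rule span_base) blast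

lemma dirs_mono: "S \<subseteq> T \<Longrightarrow> dirs S \<subseteq> dirs T"
  unfolding dirs_def by (rule span_mono) blast

lemma dirs_eq:
  assumes "a \<in> S"
  shows "dirs S = span ((\<lambda>y. y - a) ` S)"
proof
  show "dirs S \<subseteq> span ((\<lambda>y. y - a) ` S)"
    unfolding dirs_def
  proof (rule span_minimal)
    show "{y - z |y z. y \<in> S \<and> z \<in> S} \<subseteq> span ((\<lambda>y. y - a) ` S)"
    proof clarify
      fix y z assume "y \<in> S" "z \<in> S"
      then have "y - a \<in> span ((\<lambda>y. y - a) ` S)" "z - a \<in> span ((\<lambda>y. y - a) ` S)"
        by (auto intro: span_base)
      then have "(y - a) - (z - a) \<in> span ((\<lambda>y. y - a) ` S)" by (rule span_diff)
      then show "y - z \<in> span ((\<lambda>y. y - a) ` S)" by simp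
    qed
  qed simp
next
  show "span ((\<lambda>y. y - a) ` S) \<subseteq> dirs S"
    by (rule span_minimal) (auto simp: assms dirs_diff)
qed

lemma aff_dim_dirs:
  assumes "S \<noteq> {}"
  shows "aff_dim S = int (dim (dirs S))"
proof -
  obtain a where a: "a \<in> S" using assms by blast
  have "aff_dim S = int (dim ((\<lambda>x. x - a) ` S))"
    by (rule aff_dim_eq_dim_subtract) (simp add: a hull_inc)
  also have "dim ((\<lambda>x. x - a) ` S) = dim (dirs S)"
    by (simp add: dirs_eq[OF a])
  finally show ?thesis .
qed

lemma affine_hull_dirs:
  assumes "a \<in> S" "x - a \<in> dirs S"
  shows "x \<in> affine hull S"
proof -
  have "affine hull S = (\<lambda>x. a + x) ` span ((\<lambda>x. - a + x) ` S)"
    by (rule affine_hull_span_gen) (simp add: assms hull_inc)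
  moreover have "(\<lambda>x. - a + x) ` S = (\<lambda>y. y - a) ` S" by auto
  ultimately show ?thesis using assms dirs_eq[OF assms(1)]
    by (metis (no_types, lifting) add.commute diff_add_cancel image_eqI)
qed

lemma orth_dirs:
  assumes "\<forall>y\<in>G. \<forall>z\<in>G. v \<bullet> (y - z) = 0" "d \<in> dirs G"
  shows "v \<bullet> d = 0"
proof -
  have "orthogonal v d"
    using assms(2) unfolding dirs_def
    by (rule orthogonal_to_span) (use assms(1) in \<open>auto simp: orthogonal_def\<close>)
  then show ?thesis by (simp add: orthogonal_def)
qed

lemma orth_dirs_base:
  assumes "z0 \<in> S" "\<forall>y\<in>S. v \<bullet> (y - z0) = 0" "d \<in> dirs S"
  shows "v \<bullet> d = 0"
proof -
  have "orthogonal v d"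
    using assms(3) unfolding dirs_eq[OF assms(1)]
    by (rule orthogonal_to_span) (use assms(2) in \<open>auto simp: orthogonal_def\<close>)
  then show ?thesis by (simp add: orthogonal_def)
qed


lemma facet_normal:
  fixes S G :: "'n::euclidean_space set"
  assumes S: "convex S" and G: "G face_of S" "G \<noteq> {}"
    and dimG: "aff_dim G = aff_dim S - 1"
  shows "norm (nv S G) = 1" "nv S G \<in> dirs S" "\<forall>d\<in>dirs G. nv S G \<bullet> d = 0"
    "\<forall>y\<in>S. \<forall>z\<in>G. 0 \<le> nv S G \<bullet> (y - z)"
    "\<forall>x\<in>dirs S. x - (nv S G \<bullet> x) *\<^sub>R nv S G \<in> dirs G"
    "\<forall>z\<in>G. \<exists>y\<in>S. 0 < nv S G \<bullet> (y - z)"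
proof -
  obtain z0 where z0: "z0 \<in> G" using G by blast
  have GS: "G \<subseteq> S" using G face_of_imp_subset by blast
  have z0S: "z0 \<in> S" using z0 GS by blast
  have DGS: "dirs G \<subseteq> dirs S" using GS dirs_mono by blast
  have dimeq: "dim (dirs S) = dim (dirs G) + 1"
  proof -
    have "S \<noteq> {}" using z0S by blast
    then have "int (dim (dirs S)) = int (dim (dirs G)) + 1"
      using dimG aff_dim_dirs[of G] aff_dim_dirs[of S] G(2) by simp
    then show ?thesis by linarith
  qed
  define W1 where "W1 = {y \<in> dirs S. \<forall>x \<in> dirs G. orthogonal x y}"
  have dW1: "dim W1 + dim (dirs G) = dim (dirs S)"
    unfolding W1_def by (rule dim_subspace_orthogonal_to_vectors) (simp_all add: DGS)
  have subW1: "subspace W1"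
  proof -
    have "W1 = dirs S \<inter> {y. \<forall>x \<in> dirs G. orthogonal x y}" unfolding W1_def by auto
    then show ?thesis using subspace_orthogonal_to_vectors subspace_dirs
      by (metis subspace_inter)
  qed
  have "dim W1 = 1" using dW1 dimeq by simp
  then obtain w where w: "w \<in> W1" "w \<noteq> 0"
    by (metis dim_eq_0 subsetI singletonI zero_neq_one)
  have W1w: "W1 = span {w}"
  proof (rule sym, rule subspace_dim_equal)
    show "span {w} \<subseteq> W1" using w subW1 by (simp add: span_minimal)
    show "dim W1 \<le> dim (span {w})" using \<open>dim W1 = 1\<close> w by (simp add: dim_singleton)
  qed (simp_all add: subW1)
  have decomp: "\<exists>d\<in>dirs G. \<exists>t. x = d + t *\<^sub>R w" if x: "x \<in> dirs S" for x
  proof -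
    obtain y z where y: "y \<in> span (dirs G)" and z: "\<And>u. u \<in> span (dirs G) \<Longrightarrow> orthogonal z u"
      and xyz: "x = y + z"
      using orthogonal_subspace_decomp_exists by blast
    have yG: "y \<in> dirs G" using y by (simp add: span_eq_iff[THEN iffD2, OF subspace_dirs])
    have "z \<in> dirs S" using xyz x yG DGS by (metis add_diff_cancel_left' subset_iff subspace_diff subspace_dirs)
    moreover have "\<forall>u\<in>dirs G. orthogonal u z" using z span_base orthogonal_commute by metis
    ultimately have "z \<in> W1" unfolding W1_def by blast
    then obtain t where "z = t *\<^sub>R w" using W1w span_singleton by auto
    then show ?thesis using xyz yG by blast
  qed
  have wS: "w \<in> dirs S" using w W1_def by blast
  have worth: "\<forall>d\<in>dirs G. w \<bullet> d = 0" using w unfolding W1_def orthogonal_def by (simp add: inner_commute)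
  obtain y0 where y0: "y0 \<in> S" "w \<bullet> (y0 - z0) \<noteq> 0"
  proof -
    have "\<exists>y0\<in>S. w \<bullet> (y0 - z0) \<noteq> 0"
    proof (rule ccontr)
      assume "\<not> ?thesis"
      then have "w \<bullet> w = 0" using orth_dirs_base[OF z0S _ wS] by blast
      then show False using w by simp
    qed
    then show ?thesis using that by blast
  qed
  define s where "s = (if 0 < w \<bullet> (y0 - z0) then 1 else -1) / norm w"
  define v0 where "v0 = s *\<^sub>R w"
  have s0: "s \<noteq> 0" using w by (simp add: s_def)
  have nv0: "norm v0 = 1" using w by (simp add: v0_def s_def)
  have v0S: "v0 \<in> dirs S" using wS by (simp add: v0_def subspace_scale)
  have v0orth: "\<forall>d\<in>dirs G. v0 \<bullet> d = 0" using worth by (simp add: v0_def)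
  have v0y0: "0 < v0 \<bullet> (y0 - z0)"
    using y0(2) w by (auto simp: v0_def s_def divide_simps)
  have v0v0: "v0 \<bullet> v0 = 1" using nv0 by (simp add: dot_square_norm)
  have decomp2: "x - (v0 \<bullet> x) *\<^sub>R v0 \<in> dirs G" if x: "x \<in> dirs S" for x
  proof -
    obtain d t where d: "d \<in> dirs G" and xd: "x = d + t *\<^sub>R w" using decomp[OF x] by blast
    have "w = (1/s) *\<^sub>R v0" using s0 by (simp add: v0_def)
    then have xd2: "x = d + (t/s) *\<^sub>R v0" using xd by simp
    have "v0 \<bullet> x = t/s" using xd2 v0orth d v0v0 by (simp add: inner_add_right)
    then show ?thesis using xd2 d by simp
  qed
  have zero: "x \<in> G" if x: "x \<in> S" "v0 \<bullet> (x - z0) = 0" for x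
  proof -
    have "x - z0 \<in> dirs S" using x z0S dirs_diff by blast
    then have "x - z0 - (v0 \<bullet> (x - z0)) *\<^sub>R v0 \<in> dirs G" by (rule decomp2)
    then have "x - z0 \<in> dirs G" using x by simp
    then have "x \<in> affine hull G" using affine_hull_dirs z0 by blast
    then show ?thesis using face_of_imp_eq_affine_Int[OF S G(1)] x by blast
  qed
  have nonneg0: "0 \<le> v0 \<bullet> (y - z0)" if y: "y \<in> S" for y
  proof (rule ccontr)
    assume neg: "\<not> 0 \<le> v0 \<bullet> (y - z0)"
    define a where "a = v0 \<bullet> (y0 - z0)"
    define b where "b = v0 \<bullet> (y - z0)"
    have a: "0 < a" using v0y0 a_def by simp
    have b: "b < 0" using neg b_def by simp
    define \<mu> where "\<mu> = a / (a - b)"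
    have mu: "0 < \<mu>" "\<mu> < 1" using a b by (auto simp: \<mu>_def divide_simps)
    define x where "x = (1 - \<mu>) *\<^sub>R y0 + \<mu> *\<^sub>R y"
    have xS: "x \<in> S" unfolding x_def using mu by (intro convexD[OF S y0(1) y]) auto
    have "x - z0 = (1 - \<mu>) *\<^sub>R (y0 - z0) + \<mu> *\<^sub>R (y - z0)"
      by (simp add: x_def algebra_simps)
    then have "v0 \<bullet> (x - z0) = (1 - \<mu>) * a + \<mu> * b"
      by (simp add: inner_add_right a_def b_def)
    also have "\<dots> = 0" using a b by (simp add: \<mu>_def field_simps)
    finally have "x \<in> G" using zero xS by blast
    moreover have "y0 \<noteq> y" using a b a_def b_def by auto
    then have "x \<in> open_segment y0 y" unfolding in_segment x_def using mu by blast
    ultimately have "y0 \<in> G" using face_ofD[OF G(1) _ y0(1) y] by blast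
    then have "v0 \<bullet> (y0 - z0) = 0" using v0orth dirs_diff z0 by blast
    then show False using a a_def by simp
  qed
  have nonneg: "\<forall>y\<in>S. \<forall>z\<in>G. 0 \<le> v0 \<bullet> (y - z)"
  proof clarify
    fix y z assume "y \<in> S" "z \<in> G"
    have "v0 \<bullet> (z - z0) = 0" using v0orth dirs_diff \<open>z \<in> G\<close> z0 by blast
    moreover have "y - z = (y - z0) - (z - z0)" by simp
    ultimately have "v0 \<bullet> (y - z) = v0 \<bullet> (y - z0)" by (metis diff_zero inner_diff_right)
    then show "0 \<le> v0 \<bullet> (y - z)" using nonneg0 \<open>y \<in> S\<close> by simp
  qed
  have Pv0: "norm v0 = 1 \<and> v0 \<in> span {y - z | y z. y \<in> S \<and> z \<in> S} \<and>
      (\<forall>y\<in>G. \<forall>z\<in>G. v0 \<bullet> (y - z) = 0) \<and> (\<forall>y\<in>S. \<forall>z\<in>G. 0 \<le> v0 \<bullet> (y - z))"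
    using nv0 v0S v0orth nonneg dirs_diff unfolding dirs_def by blast
  have uniq: "v' = v0" if P: "norm v' = 1 \<and> v' \<in> span {y - z | y z. y \<in> S \<and> z \<in> S} \<and>
      (\<forall>y\<in>G. \<forall>z\<in>G. v' \<bullet> (y - z) = 0) \<and> (\<forall>y\<in>S. \<forall>z\<in>G. 0 \<le> v' \<bullet> (y - z))" for v'
  proof -
    have v'S: "v' \<in> dirs S" using P unfolding dirs_def by blast
    have "\<forall>d\<in>dirs G. v' \<bullet> d = 0" using P orth_dirs by blast
    then have "v' \<in> W1" using v'S unfolding W1_def orthogonal_def by (simp add: inner_commute)
    then obtain t where "v' = t *\<^sub>R w" using W1w span_singleton by auto
    then have vr: "v' = (t / s) *\<^sub>R v0" using s0 by (simp add: v0_def)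
    define r where "r = t / s"
    have "norm v' = \<bar>r\<bar> * norm v0" using vr r_def by simp
    then have "\<bar>r\<bar> = 1" using P nv0 by simp
    moreover have "0 \<le> r * (v0 \<bullet> (y0 - z0))" using vr P y0(1) z0 r_def by auto
    then have "0 \<le> r" using v0y0 by (simp add: zero_le_mult_iff)
    ultimately have "r = 1" by simp
    then show ?thesis using vr r_def by simp
  qed
  have nvv: "nv S G = v0"
    unfolding nv_def by (rule the_equality) (use Pv0 uniq in blast)+
  show "norm (nv S G) = 1" "nv S G \<in> dirs S" "\<forall>d\<in>dirs G. nv S G \<bullet> d = 0"
    "\<forall>y\<in>S. \<forall>z\<in>G. 0 \<le> nv S G \<bullet> (y - z)"
    "\<forall>x\<in>dirs S. x - (nv S G \<bullet> x) *\<^sub>R nv S G \<in> dirs G"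
    using nvv nv0 v0S v0orth nonneg decomp2 by auto
  show "\<forall>z\<in>G. \<exists>y\<in>S. 0 < nv S G \<bullet> (y - z)"
  proof
    fix z assume "z \<in> G"
    have "v0 \<bullet> (z - z0) = 0" using v0orth dirs_diff \<open>z \<in> G\<close> z0 by blast
    moreover have "y0 - z = (y0 - z0) - (z - z0)" by simp
    ultimately have "v0 \<bullet> (y0 - z) = v0 \<bullet> (y0 - z0)" by (metis diff_zero inner_diff_right)
    then show "\<exists>y\<in>S. 0 < nv S G \<bullet> (y - z)" using v0y0 y0(1) nvv by (intro bexI[of _ y0]) auto
  qed
qed


locale ridge =
  fixes S F :: "'n::euclidean_space set"
  assumes cvx: "convex S" and Fface: "F face_of S" and Fne: "F \<noteq> {}"
    and dimF: "aff_dim F = aff_dim S - 2"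
begin

definition W where "W = {y \<in> dirs S. \<forall>x \<in> dirs F. orthogonal x y}"

definition isfacet where
  "isfacet G \<longleftrightarrow> G face_of S \<and> F \<subseteq> G \<and> aff_dim G = aff_dim S - 1"

lemma FS: "F \<subseteq> S" using Fface face_of_imp_subset by blast

lemma subW: "subspace W"
proof -
  have "W = dirs S \<inter> {y. \<forall>x \<in> dirs F. orthogonal x y}" unfolding W_def by auto
  then show ?thesis using subspace_orthogonal_to_vectors subspace_dirs
    by (metis subspace_inter)
qed

lemma dimW: "dim W = 2"
proof -
  have "dim W + dim (dirs F) = dim (dirs S)"
    unfolding W_def by (rule dim_subspace_orthogonal_to_vectors) (simp_all add: dirs_mono FS)
  moreover have "int (dim (dirs S)) = int (dim (dirs F)) + 2"
  proof -
    have "S \<noteq> {}" using Fne FS by blast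
    then show ?thesis using dimF aff_dim_dirs[of F] aff_dim_dirs[of S] Fne by simp
  qed
  ultimately show ?thesis by linarith
qed

lemma facet_props:
  assumes "isfacet G"
  shows "nv G F \<in> W" "nv S G \<in> W" "norm (nv G F) = 1" "norm (nv S G) = 1"
    "nv S G \<bullet> nv G F = 0"
    "\<forall>x\<in>dirs G. x - (nv G F \<bullet> x) *\<^sub>R nv G F \<in> dirs F"
    "\<forall>d\<in>dirs G. nv S G \<bullet> d = 0" "\<forall>d\<in>dirs F. nv G F \<bullet> d = 0"
    "\<forall>y\<in>S. \<forall>z\<in>G. 0 \<le> nv S G \<bullet> (y - z)"
    "\<forall>z\<in>F. \<exists>y\<in>G. 0 < nv G F \<bullet> (y - z)"
    "nv G F \<in> dirs G"
proof -
  have G: "G face_of S" "F \<subseteq> G" "aff_dim G = aff_dim S - 1" using assms isfacet_def by auto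
  have Gne: "G \<noteq> {}" using G(2) Fne by blast
  have GS: "G \<subseteq> S" using G(1) face_of_imp_subset by blast
  have cG: "convex G" using G(1) face_of_imp_convex by blast
  have FG: "F face_of G" using face_of_subset[OF Fface G(2) GS] .
  have dFG: "aff_dim F = aff_dim G - 1" using G(3) dimF by simp
  note A = facet_normal[OF cG FG Fne dFG]
  note B = facet_normal[OF cvx G(1) Gne G(3)]
  have DFG: "dirs F \<subseteq> dirs G" using G(2) dirs_mono by blast
  have DGS: "dirs G \<subseteq> dirs S" using GS dirs_mono by blast
  show "nv G F \<in> dirs G" using A(2) .
  show "nv G F \<in> W" unfolding W_def orthogonal_def using A(2) A(3) DGS by (auto simp: inner_commute)
  show "nv S G \<in> W" unfolding W_def orthogonal_def using B(2) B(3) DFG by (auto simp: inner_commute)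
  show "norm (nv G F) = 1" "norm (nv S G) = 1" using A(1) B(1) by auto
  show "nv S G \<bullet> nv G F = 0" using B(3) A(2) by blast
  show "\<forall>x\<in>dirs G. x - (nv G F \<bullet> x) *\<^sub>R nv G F \<in> dirs F" using A(5) .
  show "\<forall>d\<in>dirs G. nv S G \<bullet> d = 0" using B(3) .
  show "\<forall>d\<in>dirs F. nv G F \<bullet> d = 0" using A(3) .
  show "\<forall>y\<in>S. \<forall>z\<in>G. 0 \<le> nv S G \<bullet> (y - z)" using B(4) .
  show "\<forall>z\<in>F. \<exists>y\<in>G. 0 < nv G F \<bullet> (y - z)" using A(6) .
qed

lemma indep:
  assumes G1: "isfacet G1" and G2: "isfacet G2" and ne: "G1 \<noteq> G2"
  shows "nv G2 F \<notin> span {nv G1 F}"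
proof
  assume "nv G2 F \<in> span {nv G1 F}"
  then obtain t where t: "nv G2 F = t *\<^sub>R nv G1 F" using span_singleton by auto
  note P1 = facet_props[OF G1] and P2 = facet_props[OF G2]
  have g1: "G1 face_of S" "F \<subseteq> G1" "aff_dim G1 = aff_dim S - 1" using G1 isfacet_def by auto
  have g2: "G2 face_of S" "F \<subseteq> G2" "aff_dim G2 = aff_dim S - 1" using G2 isfacet_def by auto
  have D: "dirs G2 \<subseteq> dirs G1"
  proof
    fix x assume x: "x \<in> dirs G2"
    have "x - (nv G2 F \<bullet> x) *\<^sub>R nv G2 F \<in> dirs F" using P2(6) x by blast
    then have a: "x - (nv G2 F \<bullet> x) *\<^sub>R nv G2 F \<in> dirs G1" using dirs_mono[OF g1(2)] by blast
    have b: "(nv G2 F \<bullet> x) *\<^sub>R nv G2 F \<in> dirs G1" using t P1(11)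
      by (simp add: subspace_scale)
    have "x = (x - (nv G2 F \<bullet> x) *\<^sub>R nv G2 F) + (nv G2 F \<bullet> x) *\<^sub>R nv G2 F" by simp
    then show "x \<in> dirs G1" using a b by (metis subspace_add subspace_dirs)
  qed
  obtain z0 where z0: "z0 \<in> F" using Fne by blast
  have "G2 \<subseteq> G1"
  proof
    fix y assume y: "y \<in> G2"
    have "y - z0 \<in> dirs G1" using D dirs_diff y z0 g2(2) by blast
    then have "y \<in> affine hull G1" using affine_hull_dirs z0 g1(2) by blast
    moreover have "y \<in> S" using y g2(1) face_of_imp_subset by blast
    ultimately show "y \<in> G1" using face_of_imp_eq_affine_Int[OF cvx g1(1)] by blast
  qed
  then have "G2 face_of G1" using face_of_subset[OF g2(1) _ face_of_imp_subset[OF g1(1)]] by blast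
  then have "aff_dim G2 < aff_dim G1"
    using face_of_aff_dim_lt[OF face_of_imp_convex[OF g1(1)]] ne by blast
  then show False using g1(3) g2(3) by simp
qed

lemma spanW:
  assumes G1: "isfacet G1" and G2: "isfacet G2" and ne: "G1 \<noteq> G2" and w: "w \<in> W"
  shows "\<exists>a b. w = a *\<^sub>R nv G1 F + b *\<^sub>R nv G2 F"
proof -
  let ?u1 = "nv G1 F" and ?u2 = "nv G2 F"
  have n1: "?u1 \<notin> span {?u2}" using indep[OF G2 G1] ne by blast
  have n2: "?u2 \<notin> span {?u1}" using indep[OF G1 G2] ne by blast
  have u2ne: "?u2 \<noteq> 0" using facet_props(3)[OF G2] by auto
  have ind: "independent {?u1, ?u2}"
    by (rule independent_insertI[OF n1]) (simp add: u2ne)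
  have neq: "?u1 \<noteq> ?u2" using n2 span_base by (metis singletonI)
  have "W \<subseteq> span {?u1, ?u2}"
    by (rule card_ge_dim_independent) (use facet_props(1)[OF G1] facet_props(1)[OF G2] ind neq dimW in auto)
  then have "w \<in> span (insert ?u1 {?u2})" using w by auto
  then obtain a where "w - a *\<^sub>R ?u1 \<in> span {?u2}" using span_breakdown_eq by blast
  then obtain b where "w - a *\<^sub>R ?u1 = b *\<^sub>R ?u2" using span_singleton by auto
  then have "w = a *\<^sub>R ?u1 + b *\<^sub>R ?u2" by (simp add: algebra_simps)
  then show ?thesis by blast
qed

lemma pos:
  assumes G1: "isfacet G1" and G2: "isfacet G2" and ne: "G1 \<noteq> G2"
  shows "0 < nv S G1 \<bullet> nv G2 F"
proof -
  let ?u1 = "nv G1 F" and ?u2 = "nv G2 F" and ?n1 = "nv S G1"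
  note P1 = facet_props[OF G1] and P2 = facet_props[OF G2]
  have g1: "G1 face_of S" "F \<subseteq> G1" using G1 isfacet_def by auto
  have g2: "G2 face_of S" "F \<subseteq> G2" using G2 isfacet_def by auto
  obtain z0 where z0: "z0 \<in> F" using Fne by blast
  obtain y where y: "y \<in> G2" "0 < ?u2 \<bullet> (y - z0)" using P2(10) z0 by blast
  define x where "x = y - z0"
  have xG2: "x \<in> dirs G2" using y z0 g2(2) dirs_diff x_def by blast
  have d: "x - (?u2 \<bullet> x) *\<^sub>R ?u2 \<in> dirs G1" using P2(6) xG2 dirs_mono[OF g1(2)] by blast
  have "?n1 \<bullet> (x - (?u2 \<bullet> x) *\<^sub>R ?u2) = 0" using P1(7) d by blast
  then have e: "?n1 \<bullet> x = (?u2 \<bullet> x) * (?n1 \<bullet> ?u2)" by (simp add: inner_diff_right)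
  have "0 \<le> ?n1 \<bullet> x" using P1(9) y(1) g2(1) face_of_imp_subset z0 g1(2) x_def by blast
  then have ge: "0 \<le> ?n1 \<bullet> ?u2" using e y(2) x_def by (simp add: zero_le_mult_iff)
  have "?n1 \<bullet> ?u2 \<noteq> 0"
  proof
    assume z: "?n1 \<bullet> ?u2 = 0"
    obtain a b where ab: "?n1 = a *\<^sub>R ?u1 + b *\<^sub>R ?u2" using spanW[OF G1 G2 ne P1(2)] by blast
    have "?n1 \<bullet> ?n1 = a * (?n1 \<bullet> ?u1) + b * (?n1 \<bullet> ?u2)"
      by (subst (2) ab) (simp add: inner_add_right)
    then have "?n1 \<bullet> ?n1 = 0" using z P1(5) by simp
    then show False using P1(4) by simp
  qed
  then show ?thesis using ge by simp
qed

lemma no_three: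
  assumes G1: "isfacet G1" and G2: "isfacet G2" and G3: "isfacet G3"
    and ne: "G1 \<noteq> G2" "G1 \<noteq> G3" "G2 \<noteq> G3"
  shows False
proof -
  obtain a b where ab: "nv G3 F = a *\<^sub>R nv G1 F + b *\<^sub>R nv G2 F"
    using spanW[OF G1 G2 ne(1) facet_props(1)[OF G3]] by blast
  have p13: "0 < nv S G1 \<bullet> nv G3 F" using pos[OF G1 G3 ne(2)] .
  have p23: "0 < nv S G2 \<bullet> nv G3 F" using pos[OF G2 G3 ne(3)] .
  have p12: "0 < nv S G1 \<bullet> nv G2 F" using pos[OF G1 G2 ne(1)] .
  have p21: "0 < nv S G2 \<bullet> nv G1 F" using pos[OF G2 G1] ne(1) by auto
  have p31: "0 < nv S G3 \<bullet> nv G1 F" using pos[OF G3 G1] ne(2) by auto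
  have p32: "0 < nv S G3 \<bullet> nv G2 F" using pos[OF G3 G2] ne(3) by auto
  have "nv S G1 \<bullet> nv G3 F = b * (nv S G1 \<bullet> nv G2 F)"
    using facet_props(5)[OF G1] by (simp add: ab inner_add_right)
  then have b: "0 < b" using p13 p12 by (simp add: zero_less_mult_iff)
  have "nv S G2 \<bullet> nv G3 F = a * (nv S G2 \<bullet> nv G1 F)"
    using facet_props(5)[OF G2] by (simp add: ab inner_add_right)
  then have a: "0 < a" using p23 p21 by (simp add: zero_less_mult_iff)
  have "nv S G3 \<bullet> nv G3 F = a * (nv S G3 \<bullet> nv G1 F) + b * (nv S G3 \<bullet> nv G2 F)"
    by (simp add: ab inner_add_right)
  moreover have "0 < a * (nv S G3 \<bullet> nv G1 F) + b * (nv S G3 \<bullet> nv G2 F)"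
    using a b p31 p32 by (simp add: add_pos_pos)
  ultimately show False using facet_props(5)[OF G3] by simp
qed

lemma identity:
  assumes G1: "isfacet G1" and G2: "isfacet G2" and ne: "G1 \<noteq> G2"
    and lf: "linear (f :: 'n \<Rightarrow> real)" and lg: "linear (g :: 'n \<Rightarrow> real)"
  shows "g (nv S G1) * f (nv G1 F) + g (nv S G2) * f (nv G2 F)
       = f (nv S G1) * g (nv G1 F) + f (nv S G2) * g (nv G2 F)"
proof -
  let ?u1 = "nv G1 F" and ?u2 = "nv G2 F" and ?n1 = "nv S G1" and ?n2 = "nv S G2"
  note P1 = facet_props[OF G1] and P2 = facet_props[OF G2]
  define c where "c = ?u1 \<bullet> ?u2"
  have u11: "?u1 \<bullet> ?u1 = 1" using P1(3) by (simp add: dot_square_norm)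
  have u22: "?u2 \<bullet> ?u2 = 1" using P2(3) by (simp add: dot_square_norm)
  have n11: "?n1 \<bullet> ?n1 = 1" using P1(4) by (simp add: dot_square_norm)
  have n22: "?n2 \<bullet> ?n2 = 1" using P2(4) by (simp add: dot_square_norm)
  obtain a b where ab: "?n1 = a *\<^sub>R ?u1 + b *\<^sub>R ?u2" using spanW[OF G1 G2 ne P1(2)] by blast
  obtain a' b' where ab': "?n2 = a' *\<^sub>R ?u1 + b' *\<^sub>R ?u2" using spanW[OF G1 G2 ne P2(2)] by blast
  have c': "?u2 \<bullet> ?u1 = c" by (simp add: c_def inner_commute)
  have "?n1 \<bullet> ?u1 = a * (?u1 \<bullet> ?u1) + b * (?u2 \<bullet> ?u1)" by (simp add: ab inner_add_left)
  then have e1: "a + b * c = 0" using P1(5) u11 c' by simp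
  have "?n1 \<bullet> ?u2 = a * (?u1 \<bullet> ?u2) + b * (?u2 \<bullet> ?u2)" by (simp add: ab inner_add_left)
  then have e2: "?n1 \<bullet> ?u2 = a * c + b" using u22 c_def by simp
  have "?n1 \<bullet> ?n1 = a * (?n1 \<bullet> ?u1) + b * (?n1 \<bullet> ?u2)"
    by (subst (2) ab) (simp add: inner_add_right)
  then have e3: "1 = a * (?n1 \<bullet> ?u1) + b * (?n1 \<bullet> ?u2)" using n11 by simp
  have p12: "0 < ?n1 \<bullet> ?u2" using pos[OF G1 G2 ne] .
  have b: "0 < b"
  proof -
    have "b * (?n1 \<bullet> ?u2) = 1" using e3 P1(5) by simp
    then show ?thesis using p12 by (smt (verit, best) mult_nonpos_nonneg)
  qed
  have "?n2 \<bullet> ?u2 = a' * (?u1 \<bullet> ?u2) + b' * (?u2 \<bullet> ?u2)" by (simp add: ab' inner_add_left)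
  then have f1: "a' * c + b' = 0" using P2(5) u22 c_def by simp
  have "?n2 \<bullet> ?u1 = a' * (?u1 \<bullet> ?u1) + b' * (?u2 \<bullet> ?u1)" by (simp add: ab' inner_add_left)
  then have f2: "?n2 \<bullet> ?u1 = a' + b' * c" using u11 c' by simp
  have "?n2 \<bullet> ?n2 = a' * (?n2 \<bullet> ?u1) + b' * (?n2 \<bullet> ?u2)"
    by (subst (2) ab') (simp add: inner_add_right)
  then have f3: "1 = a' * (?n2 \<bullet> ?u1) + b' * (?n2 \<bullet> ?u2)" using n22 by simp
  have p21: "0 < ?n2 \<bullet> ?u1" using pos[OF G2 G1] ne by auto
  have a': "0 < a'"
  proof -
    have "a' * (?n2 \<bullet> ?u1) = 1" using f3 P2(5) by simp
    then show ?thesis using p21 by (smt (verit, best) mult_nonpos_nonneg)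
  qed
  have a_eq: "a = - b * c" using e1 by simp
  have b'_eq: "b' = - a' * c" using f1 by simp
  have "1 = b * (b - b * c * c)" using e3 e2 P1(5) a_eq by simp
  moreover have "1 = a' * (a' - a' * c * c)" using f3 f2 P2(5) b'_eq by simp
  ultimately have "b * b * (1 - c * c) = a' * a' * (1 - c * c)" by (simp add: algebra_simps)
  moreover have "1 - c * c \<noteq> 0" using \<open>1 = b * (b - b * c * c)\<close> by (auto simp: algebra_simps)
  ultimately have "b * b = a' * a'" by simp
  then have bb: "b = a'" using b a' by (metis abs_of_pos real_sqrt_abs2 ) 
  have gn1: "g ?n1 = a * g ?u1 + b * g ?u2" using lg by (simp add: ab linear_add linear_scale)
  have fn1: "f ?n1 = a * f ?u1 + b * f ?u2" using lf by (simp add: ab linear_add linear_scale)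
  have gn2: "g ?n2 = a' * g ?u1 + b' * g ?u2" using lg by (simp add: ab' linear_add linear_scale)
  have fn2: "f ?n2 = a' * f ?u1 + b' * f ?u2" using lf by (simp add: ab' linear_add linear_scale)
  show ?thesis unfolding gn1 fn1 gn2 fn2 a_eq b'_eq bb by (simp add: algebra_simps)
qed

lemma two_facets:
  assumes "polyhedron S"
  shows "\<exists>G1 G2. isfacet G1 \<and> isfacet G2 \<and> G1 \<noteq> G2"
proof -
  have "aff_dim F \<noteq> aff_dim S" using dimF by linarith
  then have "F \<noteq> S" by metis
  then have Feq: "F = \<Inter>{G. G facet_of S \<and> F \<subseteq> G}"
    by (rule face_of_polyhedron[OF assms Fface Fne])
  obtain G1 where G1: "G1 facet_of S" "F \<subseteq> G1"
    by (rule face_of_polyhedron_subset_facet[OF assms Fface Fne \<open>F \<noteq> S\<close>])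
  have dG1: "aff_dim G1 = aff_dim S - 1" using G1(1) unfolding facet_of_def by blast
  have "\<exists>G2. G2 facet_of S \<and> F \<subseteq> G2 \<and> G2 \<noteq> G1"
  proof (rule ccontr)
    assume na: "\<not> ?thesis"
    have se: "{G. G facet_of S \<and> F \<subseteq> G} = {G1}"
      using na G1 by blast
    have "\<Inter>{G. G facet_of S \<and> F \<subseteq> G} = G1" unfolding se by simp
    then have "F = G1" using Feq by (rule trans[rotated])
    then have "aff_dim F = aff_dim G1" by (rule arg_cong)
    then show False using dG1 dimF by linarith
  qed
  then obtain G2 where G2: "G2 facet_of S" "F \<subseteq> G2" "G2 \<noteq> G1" by blast
  have "isfacet G1" using G1 unfolding isfacet_def facet_of_def by blast
  moreover have "isfacet G2" using G2 unfolding isfacet_def facet_of_def by blast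
  ultimately show ?thesis using G2(3) by blast
qed
end


lemma epc_props:
  assumes "euclidean_polyhedral_complex \<iota> P"
  shows "\<And>\<sigma>. \<sigma> \<in> P \<Longrightarrow> inj_on \<iota> \<sigma>"
    "\<And>\<sigma>. \<sigma> \<in> P \<Longrightarrow> polyhedron (\<iota> ` \<sigma>)"
    "\<And>\<sigma>. \<sigma> \<in> P \<Longrightarrow> \<exists>g. homeomorphism \<sigma> (\<iota> ` \<sigma>) \<iota> g"
    "\<And>\<sigma> \<tau>. \<sigma> \<in> P \<Longrightarrow> poly_face \<iota> \<tau> \<sigma> \<Longrightarrow> \<tau> \<in> P"
    "\<And>x. \<exists>V. open V \<and> x \<in> V \<and> finite {\<sigma>\<in>P. \<sigma> \<inter> V \<noteq> {}}"
  using assms unfolding euclidean_polyhedral_complex_def by blast+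

lemma pf_iff:
  assumes "inj_on \<iota> \<sigma>"
  shows "poly_face \<iota> \<tau> \<sigma> \<longleftrightarrow> \<tau> \<subseteq> \<sigma> \<and> (\<iota> ` \<tau>) face_of (\<iota> ` \<sigma>)"
proof
  assume "poly_face \<iota> \<tau> \<sigma>"
  then obtain F where F: "F face_of (\<iota> ` \<sigma>)" "\<tau> = {x\<in>\<sigma>. \<iota> x \<in> F}"
    unfolding poly_face_def by blast
  have "F \<subseteq> \<iota> ` \<sigma>" using F(1) face_of_imp_subset by blast
  then have "\<iota> ` \<tau> = F" using F(2) by auto
  then show "\<tau> \<subseteq> \<sigma> \<and> (\<iota> ` \<tau>) face_of (\<iota> ` \<sigma>)" using F by auto
next
  assume a: "\<tau> \<subseteq> \<sigma> \<and> (\<iota> ` \<tau>) face_of (\<iota> ` \<sigma>)"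
  have "\<tau> = {x\<in>\<sigma>. \<iota> x \<in> \<iota> ` \<tau>}"
    using a assms by (auto simp: inj_on_def)
  then show "poly_face \<iota> \<tau> \<sigma>" unfolding poly_face_def using a by blast
qed

lemma lin_rep_spec:
  assumes "pw_affine \<iota> P U f" "\<sigma> \<in> restr P U"
  shows "linear (lin_rep \<iota> \<sigma> U f) \<and> (\<forall>x\<in>\<sigma> \<inter> U. f x = lin_rep \<iota> \<sigma> U f (\<iota> x))"
proof -
  have "\<exists>l::'b \<Rightarrow> real. linear l \<and> (\<forall>x\<in>\<sigma> \<inter> U. f x = l (\<iota> x))"
    using assms unfolding pw_affine_def by blast
  then show ?thesis unfolding lin_rep_def by (rule someI_ex)
qed

lemma lin_rep_agree:
  assumes ep: "euclidean_polyhedral_complex \<iota> P" and U: "open U"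
    and f: "pw_affine \<iota> P U f" and \<sigma>: "\<sigma> \<in> P" and \<tau>: "\<tau> \<in> P" and sub: "\<tau> \<subseteq> \<sigma>"
    and meet: "\<tau> \<inter> U \<noteq> {}" and u: "u \<in> dirs (\<iota> ` \<tau>)"
  shows "lin_rep \<iota> \<tau> U f u = lin_rep \<iota> \<sigma> U f u"
proof -
  have \<tau>R: "\<tau> \<in> restr P U" using \<tau> meet by (simp add: restr_def)
  have \<sigma>R: "\<sigma> \<in> restr P U" using \<sigma> meet sub by (auto simp: restr_def)
  note s1 = lin_rep_spec[OF f \<tau>R] and s2 = lin_rep_spec[OF f \<sigma>R]
  define Ob where "Ob = \<iota> ` (\<tau> \<inter> U)"
  have eqO: "lin_rep \<iota> \<tau> U f y = lin_rep \<iota> \<sigma> U f y" if yO: "y \<in> Ob" for y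
  proof -
    obtain x where x: "x \<in> \<tau>" "x \<in> U" "y = \<iota> x" using yO unfolding Ob_def by blast
    have xs: "x \<in> \<sigma> \<inter> U" "x \<in> \<tau> \<inter> U" using x sub by auto
    have "f x = lin_rep \<iota> \<tau> U f (\<iota> x)" using s1 xs(2) by blast
    moreover have "f x = lin_rep \<iota> \<sigma> U f (\<iota> x)" using s2 xs(1) by blast
    ultimately show ?thesis using x(3) by simp
  qed
  obtain h where h: "homeomorphism \<tau> (\<iota> ` \<tau>) \<iota> h" using epc_props(3)[OF ep \<tau>] by blast
  have "openin (top_of_set \<tau>) (\<tau> \<inter> U)" using U by blast
  then have "openin (top_of_set (\<iota> ` \<tau>)) Ob"
    unfolding Ob_def by (rule homeomorphism_imp_open_map[OF h])
  then obtain T where T: "open T" "Ob = \<iota> ` \<tau> \<inter> T" using openin_open by blast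
  have cvx: "convex (\<iota> ` \<tau>)" using epc_props(2)[OF ep \<tau>] polyhedron_imp_convex by blast
  have "Ob \<noteq> {}" using meet unfolding Ob_def by blast
  then have ah: "affine hull Ob = affine hull (\<iota> ` \<tau>)"
    using affine_hull_convex_Int_open[OF cvx T(1)] T(2) by simp
  have lin: "linear (lin_rep \<iota> \<tau> U f)" "linear (lin_rep \<iota> \<sigma> U f)" using s1 s2 by auto
  have inspan: "y \<in> span Ob" if "y \<in> \<iota> ` \<tau>" for y
  proof -
    have "y \<in> affine hull (\<iota> ` \<tau>)" using that by (rule hull_inc)
    then have "y \<in> affine hull Ob" using ah by simp
    then show ?thesis by (rule subsetD[OF affine_hull_subset_span])
  qed
  have gen: "lin_rep \<iota> \<tau> U f x = lin_rep \<iota> \<sigma> U f x"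
    if "x \<in> {y - z | y z. y \<in> \<iota> ` \<tau> \<and> z \<in> \<iota> ` \<tau>}" for x
  proof -
    from that obtain y z where x: "x = y - z" "y \<in> \<iota> ` \<tau>" "z \<in> \<iota> ` \<tau>" by blast
    have "y \<in> span Ob" "z \<in> span Ob" using x inspan by auto
    then have "x \<in> span Ob" unfolding x(1) by (rule span_diff)
    then show ?thesis by (rule real_vector.linear_eq_on[OF lin(1) lin(2)]) (rule eqO)
  qed
  show ?thesis using u unfolding dirs_def
    by (rule real_vector.linear_eq_on[OF lin(1) lin(2)]) (rule gen)
qed



lemma wm_eq:
  assumes "\<tau> \<in> restr P U" "pdim \<iota> \<tau> = m - 1"
  shows "wmult \<iota> P U f m X \<tau> =
     - (\<Sum>\<sigma>\<in>{\<sigma>\<in>restr P U. pdim \<iota> \<sigma> = m \<and> poly_face \<iota> \<tau> \<sigma>}.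
                 X \<sigma> * lin_rep \<iota> \<sigma> U f (normal_vec \<iota> \<sigma> \<tau>))"
proof -
  have "\<tau> \<in> restr P U \<and> pdim \<iota> \<tau> = m - 1" using assms by blast
  then show ?thesis unfolding wmult_def by (rule if_P)
qed

lemma wm_zero:
  assumes "\<not> (\<tau> \<in> restr P U \<and> pdim \<iota> \<tau> = m - 1)"
  shows "wmult \<iota> P U f m X \<tau> = 0"
  unfolding wmult_def by (rule if_not_P[OF assms])

lemma pf_sub: "poly_face \<iota> a b \<Longrightarrow> a \<subseteq> b"
  unfolding poly_face_def by blast

lemma expand:
  assumes ep: "euclidean_polyhedral_complex \<iota> P"
    and \<rho>R: "\<rho> \<in> restr P U" and d\<rho>: "pdim \<iota> \<rho> = int k - 1 - 1"
  shows "wmult \<iota> P U f (int k - 1) (wmult \<iota> P U g (int k) c) \<rho> =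
    (\<Sum>\<sigma>\<in>{\<sigma>\<in>restr P U. pdim \<iota> \<sigma> = int k \<and> \<rho> \<subseteq> \<sigma>}. c \<sigma> *
       (\<Sum>\<tau>\<in>{\<tau>\<in>restr P U. pdim \<iota> \<tau> = int k - 1 \<and> poly_face \<iota> \<rho> \<tau> \<and> poly_face \<iota> \<tau> \<sigma>}.
          lin_rep \<iota> \<sigma> U g (normal_vec \<iota> \<sigma> \<tau>) * lin_rep \<iota> \<tau> U f (normal_vec \<iota> \<tau> \<rho>)))"
proof -
  define A where "A = {\<tau>\<in>restr P U. pdim \<iota> \<tau> = int k - 1 \<and> poly_face \<iota> \<rho> \<tau>}"
  define C where "C = {\<sigma>\<in>restr P U. pdim \<iota> \<sigma> = int k \<and> \<rho> \<subseteq> \<sigma>}"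
  define h where "h = (\<lambda>\<tau> \<sigma>. c \<sigma> * lin_rep \<iota> \<sigma> U g (normal_vec \<iota> \<sigma> \<tau>) * lin_rep \<iota> \<tau> U f (normal_vec \<iota> \<tau> \<rho>))"
  obtain x0 where x0: "x0 \<in> \<rho>" using \<rho>R unfolding restr_def by blast
  obtain V where V: "open V" "x0 \<in> V" "finite {\<sigma>\<in>P. \<sigma> \<inter> V \<noteq> {}}"
    using epc_props(5)[OF ep] by blast
  have finA: "finite A"
  proof (rule finite_subset[OF _ V(3)])
    show "A \<subseteq> {\<sigma>\<in>P. \<sigma> \<inter> V \<noteq> {}}"
    proof
      fix \<tau> assume "\<tau> \<in> A"
      then have "\<tau> \<in> P" "\<rho> \<subseteq> \<tau>" unfolding A_def restr_def using pf_sub by auto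
      then show "\<tau> \<in> {\<sigma>\<in>P. \<sigma> \<inter> V \<noteq> {}}" using x0 V(2) by blast
    qed
  qed
  have finC: "finite C"
  proof (rule finite_subset[OF _ V(3)])
    show "C \<subseteq> {\<sigma>\<in>P. \<sigma> \<inter> V \<noteq> {}}"
    proof
      fix \<tau> assume "\<tau> \<in> C"
      then have "\<tau> \<in> P" "\<rho> \<subseteq> \<tau>" unfolding C_def restr_def by auto
      then show "\<tau> \<in> {\<sigma>\<in>P. \<sigma> \<inter> V \<noteq> {}}" using x0 V(2) by blast
    qed
  qed
  have inner: "wmult \<iota> P U g (int k) c \<tau> =
      - (\<Sum>\<sigma>\<in>{\<sigma>\<in>C. poly_face \<iota> \<tau> \<sigma>}. c \<sigma> * lin_rep \<iota> \<sigma> U g (normal_vec \<iota> \<sigma> \<tau>))"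
    if \<tau>A: "\<tau> \<in> A" for \<tau>
  proof -
    have t: "\<tau> \<in> restr P U" "pdim \<iota> \<tau> = int k - 1" "\<rho> \<subseteq> \<tau>"
      using \<tau>A pf_sub unfolding A_def by auto
    have "{\<sigma>\<in>restr P U. pdim \<iota> \<sigma> = int k \<and> poly_face \<iota> \<tau> \<sigma>} = {\<sigma>\<in>C. poly_face \<iota> \<tau> \<sigma>}"
      unfolding C_def using t(3) pf_sub by blast
    then show ?thesis using wm_eq[OF t(1) t(2), where f = g and X = c] by simp
  qed
  have "wmult \<iota> P U f (int k - 1) (wmult \<iota> P U g (int k) c) \<rho> =
     - (\<Sum>\<tau>\<in>A. wmult \<iota> P U g (int k) c \<tau> * lin_rep \<iota> \<tau> U f (normal_vec \<iota> \<tau> \<rho>))"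
    unfolding A_def by (rule wm_eq[OF \<rho>R d\<rho>])
  also have "\<dots> = (\<Sum>\<tau>\<in>A. \<Sum>\<sigma>\<in>{\<sigma>\<in>C. poly_face \<iota> \<tau> \<sigma>}. h \<tau> \<sigma>)"
    unfolding sum_negf[symmetric]
  proof (rule sum.cong[OF refl])
    fix \<tau> assume "\<tau> \<in> A"
    show "- (wmult \<iota> P U g (int k) c \<tau> * lin_rep \<iota> \<tau> U f (normal_vec \<iota> \<tau> \<rho>)) =
        (\<Sum>\<sigma>\<in>{\<sigma>\<in>C. poly_face \<iota> \<tau> \<sigma>}. h \<tau> \<sigma>)"
      unfolding inner[OF \<open>\<tau> \<in> A\<close>] h_def by (simp add: sum_distrib_right)
  qed
  also have "\<dots> = (\<Sum>\<sigma>\<in>C. \<Sum>\<tau> | \<tau> \<in> A \<and> poly_face \<iota> \<tau> \<sigma>. h \<tau> \<sigma>)"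
    by (rule sum.swap_restrict[OF finA finC])
  also have "\<dots> = (\<Sum>\<sigma>\<in>C. c \<sigma> *
       (\<Sum>\<tau>\<in>{\<tau>\<in>restr P U. pdim \<iota> \<tau> = int k - 1 \<and> poly_face \<iota> \<rho> \<tau> \<and> poly_face \<iota> \<tau> \<sigma>}.
          lin_rep \<iota> \<sigma> U g (normal_vec \<iota> \<sigma> \<tau>) * lin_rep \<iota> \<tau> U f (normal_vec \<iota> \<tau> \<rho>)))"
  proof (rule sum.cong[OF refl])
    fix \<sigma> assume "\<sigma> \<in> C"
    have "{\<tau>. \<tau> \<in> A \<and> poly_face \<iota> \<tau> \<sigma>} =
        {\<tau>\<in>restr P U. pdim \<iota> \<tau> = int k - 1 \<and> poly_face \<iota> \<rho> \<tau> \<and> poly_face \<iota> \<tau> \<sigma>}"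
      unfolding A_def by blast
    then show "(\<Sum>\<tau> | \<tau> \<in> A \<and> poly_face \<iota> \<tau> \<sigma>. h \<tau> \<sigma>) = c \<sigma> *
       (\<Sum>\<tau>\<in>{\<tau>\<in>restr P U. pdim \<iota> \<tau> = int k - 1 \<and> poly_face \<iota> \<rho> \<tau> \<and> poly_face \<iota> \<tau> \<sigma>}.
          lin_rep \<iota> \<sigma> U g (normal_vec \<iota> \<sigma> \<tau>) * lin_rep \<iota> \<tau> U f (normal_vec \<iota> \<tau> \<rho>))"
      unfolding h_def by (simp add: sum_distrib_left mult.assoc)
  qed
  finally show ?thesis unfolding C_def .
qed


lemma inner_sym:
  assumes ep: "euclidean_polyhedral_complex \<iota> P" and U: "open U"
    and f: "pw_affine \<iota> P U f" and g: "pw_affine \<iota> P U g"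
    and \<rho>R: "\<rho> \<in> restr P U" and d\<rho>: "pdim \<iota> \<rho> = int k - 1 - 1"
    and \<sigma>R: "\<sigma> \<in> restr P U" and d\<sigma>: "pdim \<iota> \<sigma> = int k" and \<rho>\<sigma>: "\<rho> \<subseteq> \<sigma>"
  shows "(\<Sum>\<tau>\<in>{\<tau>\<in>restr P U. pdim \<iota> \<tau> = int k - 1 \<and> poly_face \<iota> \<rho> \<tau> \<and> poly_face \<iota> \<tau> \<sigma>}.
          lin_rep \<iota> \<sigma> U g (normal_vec \<iota> \<sigma> \<tau>) * lin_rep \<iota> \<tau> U f (normal_vec \<iota> \<tau> \<rho>))
       = (\<Sum>\<tau>\<in>{\<tau>\<in>restr P U. pdim \<iota> \<tau> = int k - 1 \<and> poly_face \<iota> \<rho> \<tau> \<and> poly_face \<iota> \<tau> \<sigma>}.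
          lin_rep \<iota> \<sigma> U f (normal_vec \<iota> \<sigma> \<tau>) * lin_rep \<iota> \<tau> U g (normal_vec \<iota> \<tau> \<rho>))"
    (is "sum ?l ?T = sum ?r ?T")
proof (cases "?T = {}")
  case True
  show ?thesis unfolding True sum.empty by (rule refl)
next
  case False
  then obtain \<tau>0 where \<tau>0: "\<tau>0 \<in> ?T" by blast
  have \<sigma>P: "\<sigma> \<in> P" using \<sigma>R unfolding restr_def by blast
  have inj\<sigma>: "inj_on \<iota> \<sigma>" using epc_props(1)[OF ep \<sigma>P] .
  have t0: "\<tau>0 \<in> P" "poly_face \<iota> \<rho> \<tau>0" "poly_face \<iota> \<tau>0 \<sigma>" using \<tau>0 unfolding restr_def by auto
  have t0s: "\<tau>0 \<subseteq> \<sigma>" using t0(3) pf_sub by blast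
  have inj0: "inj_on \<iota> \<tau>0" using inj_on_subset[OF inj\<sigma> t0s] .
  define S where "S = \<iota> ` \<sigma>"
  define F where "F = \<iota> ` \<rho>"
  have "F face_of \<iota> ` \<tau>0" using t0(2) pf_iff[OF inj0] unfolding F_def by blast
  moreover have "\<iota> ` \<tau>0 face_of S" using t0(3) pf_iff[OF inj\<sigma>] unfolding S_def by blast
  ultimately have Fface: "F face_of S" by (rule face_of_trans)
  have Fne: "F \<noteq> {}" using \<rho>R unfolding restr_def F_def by blast
  have dF: "aff_dim F = aff_dim S - 2" using d\<rho> d\<sigma> unfolding pdim_def F_def S_def by simp
  have polyS: "polyhedron S" using epc_props(2)[OF ep \<sigma>P] unfolding S_def .
  have cS: "convex S" using polyS polyhedron_imp_convex by blast
  interpret R: ridge S F using cS Fface Fne dF by unfold_locales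
  obtain G1 G2 where G12: "R.isfacet G1" "R.isfacet G2" "G1 \<noteq> G2"
    using R.two_facets[OF polyS] by blast
  have \<rho>ne: "\<rho> \<inter> U \<noteq> {}" using \<rho>R unfolding restr_def by blast
  have facet_tau: "{x\<in>\<sigma>. \<iota> x \<in> G} \<in> ?T \<and> \<iota> ` {x\<in>\<sigma>. \<iota> x \<in> G} = G \<and> {x\<in>\<sigma>. \<iota> x \<in> G} \<in> P
      \<and> {x\<in>\<sigma>. \<iota> x \<in> G} \<subseteq> \<sigma> \<and> {x\<in>\<sigma>. \<iota> x \<in> G} \<inter> U \<noteq> {}"
    if G: "R.isfacet G" for G
  proof -
    define \<tau> where "\<tau> = {x\<in>\<sigma>. \<iota> x \<in> G}"
    have Gf: "G face_of S" "F \<subseteq> G" "aff_dim G = aff_dim S - 1" using G R.isfacet_def by auto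
    have GS: "G \<subseteq> S" using Gf(1) face_of_imp_subset by blast
    have img: "\<iota> ` \<tau> = G" using GS unfolding \<tau>_def S_def by auto
    have pf1: "poly_face \<iota> \<tau> \<sigma>" unfolding poly_face_def \<tau>_def using Gf(1) S_def by blast
    have \<tau>P: "\<tau> \<in> P" using epc_props(4)[OF ep \<sigma>P pf1] .
    have \<rho>\<tau>: "\<rho> \<subseteq> \<tau>" using \<rho>\<sigma> Gf(2) unfolding \<tau>_def F_def by auto
    have \<tau>U: "\<tau> \<inter> U \<noteq> {}" using \<rho>ne \<rho>\<tau> by blast
    have \<tau>R: "\<tau> \<in> restr P U" using \<tau>P \<tau>U unfolding restr_def by blast
    have d\<tau>: "pdim \<iota> \<tau> = int k - 1" using img Gf(3) d\<sigma> unfolding pdim_def S_def by simp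
    have \<tau>s: "\<tau> \<subseteq> \<sigma>" unfolding \<tau>_def by blast
    have FG: "F face_of G" using face_of_subset[OF Fface Gf(2) GS] .
    have pf2: "poly_face \<iota> \<rho> \<tau>"
      using pf_iff[OF inj_on_subset[OF inj\<sigma> \<tau>s]] \<rho>\<tau> FG img unfolding F_def by simp
    show ?thesis using \<tau>R d\<tau> pf2 pf1 img \<tau>P \<tau>s \<tau>U unfolding \<tau>_def by blast
  qed
  have tau_facet: "R.isfacet (\<iota> ` \<tau>) \<and> \<tau> = {x\<in>\<sigma>. \<iota> x \<in> \<iota> ` \<tau>}" if \<tau>T: "\<tau> \<in> ?T" for \<tau>
  proof -
    have t: "\<tau> \<in> restr P U" "pdim \<iota> \<tau> = int k - 1" "poly_face \<iota> \<rho> \<tau>" "poly_face \<iota> \<tau> \<sigma>"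
      using \<tau>T by auto
    have ts: "\<tau> \<subseteq> \<sigma>" "\<iota> ` \<tau> face_of S" using t(4) pf_iff[OF inj\<sigma>] unfolding S_def by auto
    have "\<rho> \<subseteq> \<tau>" using t(3) pf_sub by blast
    then have "F \<subseteq> \<iota> ` \<tau>" unfolding F_def by blast
    moreover have "aff_dim (\<iota> ` \<tau>) = aff_dim S - 1" using t(2) d\<sigma> unfolding pdim_def S_def by simp
    ultimately have "R.isfacet (\<iota> ` \<tau>)" using ts(2) unfolding R.isfacet_def by blast
    moreover have "\<tau> = {x\<in>\<sigma>. \<iota> x \<in> \<iota> ` \<tau>}" using ts(1) inj\<sigma> by (auto simp: inj_on_def)
    ultimately show ?thesis by blast
  qed
  define \<tau>1 where "\<tau>1 = {x\<in>\<sigma>. \<iota> x \<in> G1}"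
  define \<tau>2 where "\<tau>2 = {x\<in>\<sigma>. \<iota> x \<in> G2}"
  note T1 = facet_tau[OF G12(1), folded \<tau>1_def]
  note T2 = facet_tau[OF G12(2), folded \<tau>2_def]
  have Teq: "?T = {\<tau>1, \<tau>2}"
  proof
    show "{\<tau>1, \<tau>2} \<subseteq> ?T" using T1 T2 by blast
    show "?T \<subseteq> {\<tau>1, \<tau>2}"
    proof
      fix \<tau> assume \<tau>T: "\<tau> \<in> ?T"
      note tf = tau_facet[OF \<tau>T]
      have "\<iota> ` \<tau> = G1 \<or> \<iota> ` \<tau> = G2"
      proof (rule ccontr)
        assume "\<not> ?thesis"
        then show False using R.no_three[OF G12(1) G12(2) conjunct1[OF tf]] G12(3) by metis
      qed
      then have "\<tau> = \<tau>1 \<or> \<tau> = \<tau>2" using conjunct2[OF tf] unfolding \<tau>1_def \<tau>2_def by metis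
      then show "\<tau> \<in> {\<tau>1, \<tau>2}" by blast
    qed
  qed
  have ne12: "\<tau>1 \<noteq> \<tau>2" using T1 T2 G12(3) by metis
  have lf: "linear (lin_rep \<iota> \<sigma> U f)" using lin_rep_spec[OF f \<sigma>R] by blast
  have lg: "linear (lin_rep \<iota> \<sigma> U g)" using lin_rep_spec[OF g \<sigma>R] by blast
  have nvs: "normal_vec \<iota> \<sigma> \<tau>1 = nv S G1" "normal_vec \<iota> \<tau>1 \<rho> = nv G1 F"
    "normal_vec \<iota> \<sigma> \<tau>2 = nv S G2" "normal_vec \<iota> \<tau>2 \<rho> = nv G2 F"
    unfolding normal_vec_nv S_def F_def using T1 T2 by auto
  have d1: "nv G1 F \<in> dirs (\<iota> ` \<tau>1)" using R.facet_props(11)[OF G12(1)] T1 by simp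
  have d2: "nv G2 F \<in> dirs (\<iota> ` \<tau>2)" using R.facet_props(11)[OF G12(2)] T2 by simp
  have ag: "lin_rep \<iota> \<tau>1 U h (nv G1 F) = lin_rep \<iota> \<sigma> U h (nv G1 F)"
     "lin_rep \<iota> \<tau>2 U h (nv G2 F) = lin_rep \<iota> \<sigma> U h (nv G2 F)"
    if h: "pw_affine \<iota> P U h" for h
    using lin_rep_agree[OF ep U h \<sigma>P _ _ _ d1] lin_rep_agree[OF ep U h \<sigma>P _ _ _ d2] T1 T2 by auto
  have "sum ?l ?T = ?l \<tau>1 + ?l \<tau>2" unfolding Teq using ne12 by simp
  also have "\<dots> = lin_rep \<iota> \<sigma> U g (nv S G1) * lin_rep \<iota> \<sigma> U f (nv G1 F)
      + lin_rep \<iota> \<sigma> U g (nv S G2) * lin_rep \<iota> \<sigma> U f (nv G2 F)"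
    unfolding nvs ag[OF f] ..
  also have "\<dots> = lin_rep \<iota> \<sigma> U f (nv S G1) * lin_rep \<iota> \<sigma> U g (nv G1 F)
      + lin_rep \<iota> \<sigma> U f (nv S G2) * lin_rep \<iota> \<sigma> U g (nv G2 F)"
    by (rule R.identity[OF G12 lf lg])
  also have "\<dots> = ?r \<tau>1 + ?r \<tau>2"
    unfolding nvs ag[OF g] ..
  also have "\<dots> = sum ?r ?T" unfolding Teq using ne12 by simp
  finally show ?thesis .
qed

theorem proposition3p10:
  fixes \<iota> :: "'x::second_countable_topology \<Rightarrow> 'n::euclidean_space"
    and P :: "'x set set" and U :: "'x set"
    and f g :: "'x \<Rightarrow> real" and c :: "'x set \<Rightarrow> real" and k :: nat
  assumes "euclidean_polyhedral_complex \<iota> P"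
    and "open U"
    and "pw_affine \<iota> P U f" and "pw_affine \<iota> P U g"
    and "is_weight \<iota> P U (int k) c"
  shows "wmult \<iota> P U f (int k - 1) (wmult \<iota> P U g (int k) c)
       = wmult \<iota> P U g (int k - 1) (wmult \<iota> P U f (int k) c)"
proof (rule ext)
  fix \<rho>
  show "wmult \<iota> P U f (int k - 1) (wmult \<iota> P U g (int k) c) \<rho>
       = wmult \<iota> P U g (int k - 1) (wmult \<iota> P U f (int k) c) \<rho>"
  proof (cases "\<rho> \<in> restr P U \<and> pdim \<iota> \<rho> = int k - 1 - 1")
    case False
    then show ?thesis using wm_zero by metis
  next
    case True
    then have \<rho>R: "\<rho> \<in> restr P U" and d\<rho>: "pdim \<iota> \<rho> = int k - 1 - 1" by auto
    show ?thesis
      unfolding expand[OF assms(1) \<rho>R d\<rho>]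
    proof (rule sum.cong[OF refl])
      fix \<sigma> assume "\<sigma> \<in> {\<sigma> \<in> restr P U. pdim \<iota> \<sigma> = int k \<and> \<rho> \<subseteq> \<sigma>}"
      then have \<sigma>: "\<sigma> \<in> restr P U" "pdim \<iota> \<sigma> = int k" "\<rho> \<subseteq> \<sigma>" by auto
      show "c \<sigma> * (\<Sum>\<tau>\<in>{\<tau>\<in>restr P U. pdim \<iota> \<tau> = int k - 1 \<and> poly_face \<iota> \<rho> \<tau> \<and> poly_face \<iota> \<tau> \<sigma>}.
          lin_rep \<iota> \<sigma> U g (normal_vec \<iota> \<sigma> \<tau>) * lin_rep \<iota> \<tau> U f (normal_vec \<iota> \<tau> \<rho>)) =
        c \<sigma> * (\<Sum>\<tau>\<in>{\<tau>\<in>restr P U. pdim \<iota> \<tau> = int k - 1 \<and> poly_face \<iota> \<rho> \<tau> \<and> poly_face \<iota> \<tau> \<sigma>}.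
          lin_rep \<iota> \<sigma> U f (normal_vec \<iota> \<sigma> \<tau>) * lin_rep \<iota> \<tau> U g (normal_vec \<iota> \<tau> \<rho>))"
        using inner_sym[OF assms(1,2,3,4) \<rho>R d\<rho> \<sigma>] by simp
    qed
  qed
qed

end
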